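(* Let $B$ be a positive integer and let $\Psi=\forall X\in\mathbb R^n.\exists Y\in\mathbb R^m.\,(|X|>B\lor\Phi_0(X,Y))$ be a $\Pi_{2,<}$-sentence (so $\Phi_0$ is a $\mathrm{QFF}_<$-formula). Then $\Psi$ is true over $\mathbb R$ if and only if the sentence $\exists C\in\mathbb R.\forall X\in\mathbb R^n.\exists Y\in\mathbb R^m.\,(|X|>B\lor(|Y|\le C\land\Phi_0(X,Y)))$ is true over $\mathbb R$.
   Context: $\mathcal L$ is the first-order language over the signature $\langle \mathbb Z,+,\times,<,\le\rangle$ with connectives $\land,\lor$, interpreted over $\mathbb R$. A $\mathrm{QFF}_<$-formula is a quantifier-free $\mathcal L$-formula not containing $\le$. A $\Pi_{2,<}$-sentence has the form $\forall X.\exists Y.\,\chi(X,Y)$ with $\chi$ a $\mathrm{QFF}_<$-formula. For $X=(x_1,\dots,x_n)$ and a term $c$, $|X|\le c$ abbreviates $\bigwedge_j(-c\le x_j\le c)$ and $|X|>c$ abbreviates $\bigvee_j(x_j>c\lor x_j<-c)$. *)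

theory Defs
  imports Complex_Main
begin

datatype tm = Const int | XV nat | YV nat | Add tm tm | Mul tm tm

datatype qff_lt = Lt tm tm | And qff_lt qff_lt | Or qff_lt qff_lt

fun eval_tm :: "(nat \<Rightarrow> real) \<Rightarrow> (nat \<Rightarrow> real) \<Rightarrow> tm \<Rightarrow> real" where
  "eval_tm X Y (Const k) = real_of_int k"
| "eval_tm X Y (XV i) = X i"
| "eval_tm X Y (YV j) = Y j"
| "eval_tm X Y (Add s t) = eval_tm X Y s + eval_tm X Y t"
| "eval_tm X Y (Mul s t) = eval_tm X Y s * eval_tm X Y t"

fun holds :: "(nat \<Rightarrow> real) \<Rightarrow> (nat \<Rightarrow> real) \<Rightarrow> qff_lt \<Rightarrow> bool" where
  "holds X Y (Lt s t) = (eval_tm X Y s < eval_tm X Y t)"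
| "holds X Y (And f g) = (holds X Y f \<and> holds X Y g)"
| "holds X Y (Or f g) = (holds X Y f \<or> holds X Y g)"

fun tm_ok :: "nat \<Rightarrow> nat \<Rightarrow> tm \<Rightarrow> bool" where
  "tm_ok n m (Const k) = True"
| "tm_ok n m (XV i) = (i < n)"
| "tm_ok n m (YV j) = (j < m)"
| "tm_ok n m (Add s t) = (tm_ok n m s \<and> tm_ok n m t)"
| "tm_ok n m (Mul s t) = (tm_ok n m s \<and> tm_ok n m t)"

fun fm_ok :: "nat \<Rightarrow> nat \<Rightarrow> qff_lt \<Rightarrow> bool" where
  "fm_ok n m (Lt s t) = (tm_ok n m s \<and> tm_ok n m t)"
| "fm_ok n m (And f g) = (fm_ok n m f \<and> fm_ok n m g)"
| "fm_ok n m (Or f g) = (fm_ok n m f \<and> fm_ok n m g)"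

definition abs_gt :: "nat \<Rightarrow> (nat \<Rightarrow> real) \<Rightarrow> real \<Rightarrow> bool" where
  "abs_gt n X c \<longleftrightarrow> (\<exists>j<n. X j > c \<or> X j < - c)"

definition abs_le :: "nat \<Rightarrow> (nat \<Rightarrow> real) \<Rightarrow> real \<Rightarrow> bool" where
  "abs_le n X c \<longleftrightarrow> (\<forall>j<n. - c \<le> X j \<and> X j \<le> c)"

end

theory Submission
  imports Defs "HOL-Analysis.Analysis"
begin

lemma eval_tm_cong:
  "tm_ok n m t \<Longrightarrow> (\<forall>i<n. X i = X' i) \<Longrightarrow> eval_tm X Y t = eval_tm X' Y t"
  by (induction t) auto

lemma holds_cong:
  "fm_ok n m f \<Longrightarrow> (\<forall>i<n. X i = X' i) \<Longrightarrow> holds X Y f = holds X' Y f"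
  by (induction f) (auto simp: eval_tm_cong[of n m _ X X' Y])

lemma eval_tm_cont: "continuous_on UNIV (\<lambda>z::nat\<Rightarrow>real. eval_tm z Y t)"
  by (induction t) (auto intro!: continuous_intros)

lemma holds_open: "open {z::nat\<Rightarrow>real. holds z Y f}"
proof (induction f)
  case (Lt s t)
  then show ?case
    using open_Collect_less[OF eval_tm_cont eval_tm_cont] by simp
next
  case (And f g)
  then show ?case by (simp add: Collect_conj_eq open_Int)
next
  case (Or f g)
  then show ?case by (simp add: Collect_disj_eq open_Un)
qed

theorem mainTheorem6:
  fixes B n m :: nat and \<Phi>0 :: qff_lt
  assumes "B > 0" and "fm_ok n m \<Phi>0"
  shows "(\<forall>X. \<exists>Y. abs_gt n X (real B) \<or> holds X Y \<Phi>0) \<longleftrightarrow>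
         (\<exists>C::real. \<forall>X. \<exists>Y. abs_gt n X (real B) \<or> (abs_le m Y C \<and> holds X Y \<Phi>0))"
proof
  assume H: "\<forall>X. \<exists>Y. abs_gt n X (real B) \<or> holds X Y \<Phi>0"
  define S where "S = (\<lambda>j::nat. if j < n then {- real B..real B} else {0::real})"
  define K where "K = PiE UNIV S"
  have "compactin (product_topology (\<lambda>i. euclidean) UNIV) K"
    unfolding K_def by (subst compactin_PiE) (auto simp: S_def)
  hence cK: "compact K"
    by (simp add: euclidean_product_topology)
  have "\<forall>x\<in>K. \<exists>Y. holds x Y \<Phi>0"
  proof
    fix x assume "x \<in> K"
    hence "\<And>j. j < n \<Longrightarrow> x j \<in> {- real B..real B}"
      by (simp add: K_def S_def PiE_def Pi_def) (metis atLeastAtMost_iff)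
    hence "\<not> abs_gt n x (real B)"
      unfolding abs_gt_def by (meson atLeastAtMost_iff not_less)
    thus "\<exists>Y. holds x Y \<Phi>0" using H by blast
  qed
  then obtain Yf where Yf: "\<And>x. x \<in> K \<Longrightarrow> holds x (Yf x) \<Phi>0" by metis
  have "K \<subseteq> (\<Union>x\<in>K. {z. holds z (Yf x) \<Phi>0})" using Yf by blast
  then obtain D where D: "D \<subseteq> K" "finite D" "K \<subseteq> (\<Union>x\<in>D. {z. holds z (Yf x) \<Phi>0})"
    using compactE_image[OF cK, of K "\<lambda>x. {z. holds z (Yf x) \<Phi>0}"] holds_open by blast
  define C where "C = (\<Sum>y\<in>D. \<Sum>j<m. \<bar>Yf y j\<bar>)"
  show "\<exists>C::real. \<forall>X. \<exists>Y. abs_gt n X (real B) \<or> (abs_le m Y C \<and> holds X Y \<Phi>0)"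
  proof (rule exI[of _ C], intro allI)
    fix X
    show "\<exists>Y. abs_gt n X (real B) \<or> (abs_le m Y C \<and> holds X Y \<Phi>0)"
    proof (cases "abs_gt n X (real B)")
      case True then show ?thesis by blast
    next
      case False
      define X' where "X' = (\<lambda>j. if j < n then X j else 0)"
      have "X' \<in> K" using False
        by (auto simp: K_def S_def X'_def abs_gt_def PiE_def Pi_def extensional_def not_less dest: leD)
      then obtain y where y: "y \<in> D" "holds X' (Yf y) \<Phi>0" using D by blast
      have hX: "holds X (Yf y) \<Phi>0"
        using holds_cong[OF assms(2), of X X' "Yf y"] y by (simp add: X'_def)
      have "abs_le m (Yf y) C"
        unfolding abs_le_def
      proof (intro allI impI)
        fix j assume j: "j < m"
        have "\<bar>Yf y j\<bar> \<le> (\<Sum>j<m. \<bar>Yf y j\<bar>)"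
          using j by (intro member_le_sum) auto
        also have "\<dots> \<le> C" unfolding C_def
          using y D by (intro member_le_sum[where f="\<lambda>y. \<Sum>j<m. \<bar>Yf y j\<bar>"]) (auto intro: sum_nonneg)
        finally show "- C \<le> Yf y j \<and> Yf y j \<le> C" by linarith
      qed
      thus "\<exists>Y. abs_gt n X (real B) \<or> (abs_le m Y C \<and> holds X Y \<Phi>0)" using hX by blast
    qed
  qed
next
  assume "\<exists>C::real. \<forall>X. \<exists>Y. abs_gt n X (real B) \<or> (abs_le m Y C \<and> holds X Y \<Phi>0)"
  thus "\<forall>X. \<exists>Y. abs_gt n X (real B) \<or> holds X Y \<Phi>0" by blast
qed

end
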